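(* Let $(\Gamma,\rho)$ be a weakly connected voltage graph with finite voltage group $G$. Then for any two vertices $v_i,v_j$ of $\Gamma$, $|\mathrm{Net}(v_i,V)|=|\mathrm{Net}(v_j,V)|$.
   Context: $\Gamma=(V,E)$ simple digraph, $e_{ij}$ the edge $v_i\to v_j$, $\rho:E\to G$. Semi-walk $w=v_{i_1}a_1\dots a_{n-1}v_{i_n}$ with each $a_j\in\{e_{i_ji_{j+1}},e_{i_{j+1}i_j}\}$; weakly connected: any two vertices joined by a semi-walk. Net voltage $f(w)=\bar\rho(a_1)\cdots\bar\rho(a_{n-1})$ with $\bar\rho(a_j)=\rho(a_j)$ for forward and $\rho(a_j)^{-1}$ for backward edges ($f=\mathbf 1$ on a single vertex). $\mathrm{Net}(v_i,V)=\{f(w): w$ a semi-walk starting at $v_i$ (ending anywhere)$\}$. *)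

theory Defs
  imports "HOL-Algebra.Group"
begin

definition simple_digraph :: "'v set \<Rightarrow> ('v \<times> 'v) set \<Rightarrow> bool" where
  "simple_digraph V E \<longleftrightarrow> finite V \<and> E \<subseteq> V \<times> V \<and> (\<forall>v. (v, v) \<notin> E)"

text \<open>A semi-walk starting at u is given by a list of steps (b, w):
  b = True means the forward edge (current, w) is used, b = False the backward edge (w, current).\<close>
fun semi_walk :: "('v \<times> 'v) set \<Rightarrow> 'v \<Rightarrow> (bool \<times> 'v) list \<Rightarrow> bool" where
  "semi_walk E u [] = True"
| "semi_walk E u ((b, w) # s) =
     ((if b then (u, w) \<in> E else (w, u) \<in> E) \<and> semi_walk E w s)"

definition walk_end :: "'v \<Rightarrow> (bool \<times> 'v) list \<Rightarrow> 'v" where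
  "walk_end u s = last (u # map snd s)"

definition weakly_connected :: "'v set \<Rightarrow> ('v \<times> 'v) set \<Rightarrow> bool" where
  "weakly_connected V E \<longleftrightarrow>
     (\<forall>u\<in>V. \<forall>w\<in>V. \<exists>s. semi_walk E u s \<and> walk_end u s = w)"

fun net_voltage :: "('g, 'b) monoid_scheme \<Rightarrow> ('v \<times> 'v \<Rightarrow> 'g) \<Rightarrow> 'v \<Rightarrow> (bool \<times> 'v) list \<Rightarrow> 'g" where
  "net_voltage G \<rho> u [] = \<one>\<^bsub>G\<^esub>"
| "net_voltage G \<rho> u ((b, w) # s) =
     (if b then \<rho> (u, w) else inv\<^bsub>G\<^esub> (\<rho> (w, u))) \<otimes>\<^bsub>G\<^esub> net_voltage G \<rho> w s"

definition Net :: "('g, 'b) monoid_scheme \<Rightarrow> ('v \<times> 'v) set \<Rightarrow> ('v \<times> 'v \<Rightarrow> 'g) \<Rightarrow> 'v \<Rightarrow> 'g set" where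
  "Net G E \<rho> u = {net_voltage G \<rho> u s | s. semi_walk E u s}"

end

theory Submission
  imports Defs
begin

lemma nv_carrier:
  assumes "group G" "\<forall>e\<in>E. \<rho> e \<in> carrier G"
  shows "semi_walk E u s \<Longrightarrow> net_voltage G \<rho> u s \<in> carrier G"
proof (induction s arbitrary: u)
  case Nil then show ?case using group.is_monoid[OF assms(1)] by (simp add: monoid.one_closed)
next
  case (Cons a s)
  obtain b w where a: "a = (b, w)" by (cases a)
  show ?case using Cons assms a
    by (auto simp: group.inv_closed monoid.m_closed group.is_monoid split: if_splits)
qed

lemma sw_append:
  "semi_walk E u (s @ t) = (semi_walk E u s \<and> semi_walk E (walk_end u s) t)"
proof (induction s arbitrary: u)
  case Nil then show ?case by (simp add: walk_end_def)
next
  case (Cons a s)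
  obtain b w where a: "a = (b, w)" by (cases a)
  have "walk_end u ((b,w)#s) = walk_end w s" by (simp add: walk_end_def)
  then show ?case using Cons a by auto
qed

lemma nv_append:
  assumes "group G" "\<forall>e\<in>E. \<rho> e \<in> carrier G"
  shows "semi_walk E u (s @ t) \<Longrightarrow>
    net_voltage G \<rho> u (s @ t) = net_voltage G \<rho> u s \<otimes>\<^bsub>G\<^esub> net_voltage G \<rho> (walk_end u s) t"
proof (induction s arbitrary: u)
  case Nil
  have "net_voltage G \<rho> u t \<in> carrier G" using nv_carrier[OF assms] Nil by simp
  then show ?case using assms(1) by (simp add: walk_end_def group.is_monoid monoid.l_one)
next
  case (Cons a s)
  obtain b w where a: "a = (b, w)" by (cases a)
  have we: "walk_end u ((b,w)#s) = walk_end w s" by (simp add: walk_end_def)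
  have sw: "semi_walk E w (s @ t)" "semi_walk E w s" "semi_walk E (walk_end w s) t"
    using Cons.prems a sw_append[of E w s t] by auto
  have c1: "net_voltage G \<rho> w s \<in> carrier G" using nv_carrier[OF assms] sw by blast
  have c2: "net_voltage G \<rho> (walk_end w s) t \<in> carrier G" using nv_carrier[OF assms] sw by blast
  have c0: "(if b then \<rho> (u, w) else inv\<^bsub>G\<^esub> (\<rho> (w, u))) \<in> carrier G"
    using Cons.prems a assms by (auto simp: group.inv_closed split: if_splits)
  show ?case using Cons.IH[OF sw(1)] a we c0 c1 c2 assms(1)
    by (simp add: monoid.m_assoc group.is_monoid)
qed

lemma card_le:
  assumes "group G" "finite (carrier G)" "\<forall>e\<in>E. \<rho> e \<in> carrier G"
    and "semi_walk E vi p" "walk_end vi p = vj"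
  shows "card (Net G E \<rho> vj) \<le> card (Net G E \<rho> vi)"
proof -
  let ?g = "net_voltage G \<rho> vi p"
  have gc: "?g \<in> carrier G" using nv_carrier[OF assms(1,3)] assms(4) by blast
  have sub: "\<And>u. Net G E \<rho> u \<subseteq> carrier G"
    using nv_carrier[OF assms(1,3)] by (auto simp: Net_def)
  have fin: "finite (Net G E \<rho> vi)" using sub assms(2) finite_subset by blast
  have img: "(\<lambda>x. ?g \<otimes>\<^bsub>G\<^esub> x) ` Net G E \<rho> vj \<subseteq> Net G E \<rho> vi"
  proof
    fix y assume "y \<in> (\<lambda>x. ?g \<otimes>\<^bsub>G\<^esub> x) ` Net G E \<rho> vj"
    then obtain s where s: "semi_walk E vj s" "y = ?g \<otimes>\<^bsub>G\<^esub> net_voltage G \<rho> vj s"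
      by (auto simp: Net_def)
    have "semi_walk E vi (p @ s)" using sw_append[of E vi p s] assms(4,5) s by simp
    moreover have "net_voltage G \<rho> vi (p @ s) = y"
      using nv_append[OF assms(1,3) calculation] assms(5) s by simp
    ultimately show "y \<in> Net G E \<rho> vi" unfolding Net_def by blast
  qed
  have inj: "inj_on (\<lambda>x. ?g \<otimes>\<^bsub>G\<^esub> x) (Net G E \<rho> vj)"
  proof (rule inj_onI)
    fix x y assume xy: "x \<in> Net G E \<rho> vj" "y \<in> Net G E \<rho> vj" "?g \<otimes>\<^bsub>G\<^esub> x = ?g \<otimes>\<^bsub>G\<^esub> y"
    have "?g \<in> Units G" using gc group.Units_eq[OF assms(1)] by simp
    moreover have "x \<in> carrier G" "y \<in> carrier G" using xy sub by auto
    ultimately show "x = y" using xy(3) monoid.Units_l_cancel[OF group.is_monoid[OF assms(1)]] by blast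
  qed
  show ?thesis using card_inj_on_le[OF inj img fin] .
qed

lemma walk_rev:
  "semi_walk E u p \<Longrightarrow> \<exists>q. semi_walk E (walk_end u p) q \<and> walk_end (walk_end u p) q = u"
proof (induction p arbitrary: u)
  case Nil then show ?case by (auto simp: walk_end_def intro: exI[of _ "[]"])
next
  case (Cons a p)
  obtain b w where a: "a = (b, w)" by (cases a)
  have we: "walk_end u ((b,w)#p) = walk_end w p" by (simp add: walk_end_def)
  from Cons a obtain q where q: "semi_walk E (walk_end w p) q" "walk_end (walk_end w p) q = w" by auto
  have "semi_walk E w [(\<not> b, u)]" using Cons.prems a by auto
  then have "semi_walk E (walk_end w p) (q @ [(\<not> b, u)])" using sw_append q by metis
  moreover have "walk_end (walk_end w p) (q @ [(\<not> b, u)]) = u" by (simp add: walk_end_def)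
  ultimately show ?case using a we by auto
qed

theorem lemma5:
  fixes G :: "('g, 'b) monoid_scheme" and V :: "'v set" and E :: "('v \<times> 'v) set"
    and \<rho> :: "'v \<times> 'v \<Rightarrow> 'g"
  assumes "group G" and "finite (carrier G)"
    and "simple_digraph V E"
    and "\<forall>e\<in>E. \<rho> e \<in> carrier G"
    and "weakly_connected V E"
    and "vi \<in> V" and "vj \<in> V"
  shows "card (Net G E \<rho> vi) = card (Net G E \<rho> vj)"
proof -
  obtain p where p: "semi_walk E vi p" "walk_end vi p = vj"
    using assms(5,6,7) by (auto simp: weakly_connected_def)
  obtain q where q: "semi_walk E vj q" "walk_end vj q = vi"
    using assms(5,6,7) by (auto simp: weakly_connected_def)
  show ?thesis using card_le[OF assms(1,2,4) p] card_le[OF assms(1,2,4) q] by simp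
qed

end
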